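(* Let $S$ be a closed session type with $S\neq\mathsf{end}$. Then there is no monitor $M$ that is both sound and complete for $S$; that is, there is no monitor $M$ such that (soundness) for every process $P$, if $\langle P;M\rangle\xRightarrow{t}\langle P';\mathsf{no}_P\rangle$ for some trace $t$ and process $P'$ then $\emptyset\cdot\emptyset\vdash P:S$ is not derivable, and (completeness) for every process $P$, if $\emptyset\cdot\emptyset\vdash P:S$ is not derivable then there exist a trace $t$ and process $P'$ with $\langle P;M\rangle\xRightarrow{t}\langle P';\mathsf{no}_P\rangle$.
   Context: Values $v$ (including tuples), value variables $x$, process variables $X$; $a$ ranges over values and value variables. Boolean predicates $A$ include $\mathsf{tt},\mathsf{ff}$, comparisons, conjunction, negation; $A\Downarrow\mathsf{tt}$ / $A\Downarrow\mathsf{ff}$ denote evaluation; predicates are type-checked by standard rules. Processes: $P,Q ::= \triangleleft \mathtt{l}(a).P \mid \triangleright\{\mathtt{l}_i(x_i).P_i\}_{i\in I} \mid \mu_X.P \mid X \mid \mathsf{if}\ A\ \mathsf{then}\ P\ \mathsf{else}\ Q \mid \mathbf{0}$, guarded recursion. Transitions: $\mu_X.P \xrightarrow{\tau} P[\mu_X.P/X]$; $\triangleleft\mathtt{l}(v).P \xrightarrow{\triangleleft \mathtt{l}(v)} P$; $\triangleright\{\mathtt{l}_i(x_i).P_i\}_{i\in I} \xrightarrow{\triangleright \mathtt{l}_j(v)} P_j[v/x_j]$ for $j\in I$; $\mathsf{if}\ A\ \mathsf{then}\ P\ \mathsf{else}\ Q \xrightarrow{\tau} P$ if $A\Downarrow\mathsf{tt}$,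 $\xrightarrow{\tau} Q$ if $A\Downarrow\mathsf{ff}$. Base types $\mathsf{B} ::= \mathsf{Int}\mid\mathsf{Str}\mid\mathsf{Bool}\mid\dots\mid(\mathsf{B},\mathsf{B})$. Session types $S ::= \oplus\{!\mathtt{l}_i(\mathsf{B}_i).S_i\}_{i\in I} \mid \&\{?\mathtt{l}_i(\mathsf{B}_i).S_i\}_{i\in I} \mid \mathsf{rec}\ X.S \mid X \mid \mathsf{end}$, $I\neq\emptyset$, labels pairwise distinct, guarded recursion; types are equi-recursive ($\mathsf{rec}\ X.S$ identified with its unfolding), so "$S\neq\mathsf{end}$" is understood up to this identification. Typing with $\Theta$ (process variables to session types) and $\Gamma$ (value variables to base types): $\Gamma\vdash x:\mathsf{B}$ if $\Gamma(x)=\mathsf{B}$; $\Gamma\vdash v:\mathsf{B}$ if $v\in\mathsf{B}$. (tBra) if for all $i\in I$, $\Theta\cdot\Gamma,x_i:\mathsf{B}_i\vdash P_i:S_i$, then $\Theta\cdot\Gamma\vdash \triangleright\{\mathtt{l}_i(x_i).P_i\}_{i\in I\cup J} : \&\{?\mathtt{l}_i(\mathsf{B}_i).S_i\}_{i\in I}$; (tSel) if some $i\in I$ has $\mathtt{l}=\mathtt{l}_i$, $\Gamma\vdash a:\mathsf{B}_i$, $\Theta\cdot\Gamma\vdash P:S_i$, then $\Theta\cdot\Gamma\vdash \triangleleft\mathtt{l}(a).P : \oplus\{!\mathtt{l}_i(\mathsf{B}_i).S_i\}_{i\in I}$; (tRec) $\Theta,X:S\cdot\Gamma\vdash P:S$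 implies $\Theta\cdot\Gamma\vdash\mu_X.P:S$; (tPVar) $\Theta(X)=S$ implies $\Theta\cdot\Gamma\vdash X:S$; (tIf) $\Gamma\vdash A:\mathsf{Bool}$, $\Theta\cdot\Gamma\vdash P:S$, $\Theta\cdot\Gamma\vdash Q:S$ imply $\Theta\cdot\Gamma\vdash \mathsf{if}\ A\ \mathsf{then}\ P\ \mathsf{else}\ Q:S$; (tNil) $\Theta\cdot\Gamma\vdash\mathbf{0}:\mathsf{end}$. Monitors: $M,N ::= \triangleleft\mathtt{l}(a).M \mid \triangleright\{\mathtt{l}_i(x_i).M_i\}_{i\in I} \mid \blacktriangle\mathtt{l}(a).M \mid \blacktriangledown\{\mathtt{l}_i(x_i).M_i\}_{i\in I} \mid \mu_X.M \mid X \mid \mathsf{if}\ A\ \mathsf{then}\ M\ \mathsf{else}\ N \mid \mathbf{0} \mid \mathsf{no}_P \mid \mathsf{no}_E$ ($\triangleleft,\triangleright$: send to / receive from the monitored process; $\blacktriangle,\blacktriangledown$: send to / receive from the environment). Transitions: $\triangleleft\mathtt{l}(v).M\xrightarrow{\triangleleft\mathtt{l}(v)}M$; $\blacktriangle\mathtt{l}(v).M\xrightarrow{\blacktriangle\mathtt{l}(v)}M$; $\mu_X.M\xrightarrow{\tau}M[\mu_X.M/X]$; $\triangleright\{\mathtt{l}_i(x_i).M_i\}_{i\in I}\xrightarrow{\triangleright\mathtt{l}_j(v)}M_j[v/x_j]$, $\blacktriangledown\{\mathtt{l}_i(x_i).M_i\}_{i\in I}\xrightarrow{\blacktriangledown\mathtt{l}_j(v)}M_j[v/x_j]$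 for $j\in I$; conditionals as for processes; $\triangleright\{\mathtt{l}_i(x_i).M_i\}_{i\in I}\xrightarrow{\triangleright\mathtt{l}(v)}\mathsf{no}_P$ and $\blacktriangledown\{\mathtt{l}_i(x_i).M_i\}_{i\in I}\xrightarrow{\blacktriangledown\mathtt{l}(v)}\mathsf{no}_E$ whenever $\mathtt{l}\neq\mathtt{l}_i$ for all $i\in I$. Composite system $\langle P;M\rangle$: $P\xrightarrow{\triangleleft\mathtt{l}(v)}P'$, $M\xrightarrow{\triangleright\mathtt{l}(v)}M'$ give $\langle P;M\rangle\xrightarrow{\tau}\langle P';M'\rangle$; $P\xrightarrow{\triangleright\mathtt{l}(v)}P'$, $M\xrightarrow{\triangleleft\mathtt{l}(v)}M'$ give $\langle P;M\rangle\xrightarrow{\tau}\langle P';M'\rangle$; $M\xrightarrow{\alpha}M'$ with $\alpha\in\{\blacktriangle\mathtt{l}(v),\blacktriangledown\mathtt{l}(v)\}$ gives $\langle P;M\rangle\xrightarrow{\alpha}\langle P;M'\rangle$; $\tau$-moves of $P$ or $M$ alone lift to $\langle P;M\rangle$. A trace $t$ is a finite sequence of actions $\blacktriangle\mathtt{l}(v),\blacktriangledown\mathtt{l}(v)$; $\xRightarrow{t}$ interleaves $t$ with finitely many $\tau$-transitions. *)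

theory Defs
  imports Main
begin

type_synonym label = string
type_synonym vname = string
type_synonym pvar = string    (* process / type / monitor recursion variables X *)

datatype val = VInt int | VStr string | VBool bool | VPair val val

datatype btype = TInt | TStr | TBool | TPair btype btype

fun val_has_type :: "val \<Rightarrow> btype \<Rightarrow> bool" where
  "val_has_type (VInt _) TInt = True"
| "val_has_type (VStr _) TStr = True"
| "val_has_type (VBool _) TBool = True"
| "val_has_type (VPair v w) (TPair B C) = (val_has_type v B \<and> val_has_type w C)"
| "val_has_type _ _ = False"

datatype aexp = AVal val | AVar vname

datatype pred = PTrue | PFalse | PEq aexp aexp | PLe aexp aexp | PAnd pred pred | PNot pred

fun eval_pred :: "pred \<Rightarrow> bool option" where
  "eval_pred PTrue = Some True"
| "eval_pred PFalse = Some False"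
| "eval_pred (PEq (AVal v) (AVal w)) = Some (v = w)"
| "eval_pred (PEq _ _) = None"
| "eval_pred (PLe (AVal (VInt i)) (AVal (VInt j))) = Some (i \<le> j)"
| "eval_pred (PLe _ _) = None"
| "eval_pred (PAnd A B) =
     (case (eval_pred A, eval_pred B) of (Some a, Some b) \<Rightarrow> Some (a \<and> b) | _ \<Rightarrow> None)"
| "eval_pred (PNot A) = map_option Not (eval_pred A)"

fun aexp_has_type :: "(vname \<Rightarrow> btype option) \<Rightarrow> aexp \<Rightarrow> btype \<Rightarrow> bool" where
  "aexp_has_type \<Gamma> (AVar x) B = (\<Gamma> x = Some B)"
| "aexp_has_type \<Gamma> (AVal v) B = val_has_type v B"

fun pred_bool :: "(vname \<Rightarrow> btype option) \<Rightarrow> pred \<Rightarrow> bool" where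
  "pred_bool \<Gamma> PTrue = True"
| "pred_bool \<Gamma> PFalse = True"
| "pred_bool \<Gamma> (PEq a b) = (\<exists>B. aexp_has_type \<Gamma> a B \<and> aexp_has_type \<Gamma> b B)"
| "pred_bool \<Gamma> (PLe a b) = (aexp_has_type \<Gamma> a TInt \<and> aexp_has_type \<Gamma> b TInt)"
| "pred_bool \<Gamma> (PAnd A B) = (pred_bool \<Gamma> A \<and> pred_bool \<Gamma> B)"
| "pred_bool \<Gamma> (PNot A) = pred_bool \<Gamma> A"

fun subst_a :: "vname \<Rightarrow> val \<Rightarrow> aexp \<Rightarrow> aexp" where
  "subst_a x v (AVar y) = (if x = y then AVal v else AVar y)"
| "subst_a x v (AVal w) = AVal w"

fun subst_pred :: "vname \<Rightarrow> val \<Rightarrow> pred \<Rightarrow> pred" where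
  "subst_pred x v PTrue = PTrue"
| "subst_pred x v PFalse = PFalse"
| "subst_pred x v (PEq a b) = PEq (subst_a x v a) (subst_a x v b)"
| "subst_pred x v (PLe a b) = PLe (subst_a x v a) (subst_a x v b)"
| "subst_pred x v (PAnd A B) = PAnd (subst_pred x v A) (subst_pred x v B)"
| "subst_pred x v (PNot A) = PNot (subst_pred x v A)"

fun fv_a :: "aexp \<Rightarrow> vname set" where
  "fv_a (AVar x) = {x}" | "fv_a (AVal _) = {}"

fun fv_pred :: "pred \<Rightarrow> vname set" where
  "fv_pred PTrue = {}"
| "fv_pred PFalse = {}"
| "fv_pred (PEq a b) = fv_a a \<union> fv_a b"
| "fv_pred (PLe a b) = fv_a a \<union> fv_a b"
| "fv_pred (PAnd A B) = fv_pred A \<union> fv_pred B"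
| "fv_pred (PNot A) = fv_pred A"

datatype proc =
    PSend label aexp proc
  | PBranch "(label \<times> vname \<times> proc) list"
  | PRec pvar proc
  | PVar pvar
  | PIf pred proc proc
  | PNil

fun psubst_v :: "vname \<Rightarrow> val \<Rightarrow> proc \<Rightarrow> proc" where
  "psubst_v x v (PSend l a P) = PSend l (subst_a x v a) (psubst_v x v P)"
| "psubst_v x v (PBranch bs) =
     PBranch (map (\<lambda>(l, y, Q). (l, y, if y = x then Q else psubst_v x v Q)) bs)"
| "psubst_v x v (PRec X P) = PRec X (psubst_v x v P)"
| "psubst_v x v (PVar X) = PVar X"
| "psubst_v x v (PIf A P Q) = PIf (subst_pred x v A) (psubst_v x v P) (psubst_v x v Q)"
| "psubst_v x v PNil = PNil"

fun psubst_X :: "pvar \<Rightarrow> proc \<Rightarrow> proc \<Rightarrow> proc" where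
  "psubst_X X R (PSend l a P) = PSend l a (psubst_X X R P)"
| "psubst_X X R (PBranch bs) = PBranch (map (\<lambda>(l, y, Q). (l, y, psubst_X X R Q)) bs)"
| "psubst_X X R (PRec Y P) = (if X = Y then PRec Y P else PRec Y (psubst_X X R P))"
| "psubst_X X R (PVar Y) = (if X = Y then R else PVar Y)"
| "psubst_X X R (PIf A P Q) = PIf A (psubst_X X R P) (psubst_X X R Q)"
| "psubst_X X R PNil = PNil"

fun fv_proc :: "proc \<Rightarrow> vname set" where
  "fv_proc (PSend l a P) = fv_a a \<union> fv_proc P"
| "fv_proc (PBranch bs) = (\<Union>(l, y, Q) \<in> set bs. fv_proc Q - {y})"
| "fv_proc (PRec X P) = fv_proc P"
| "fv_proc (PVar X) = {}"
| "fv_proc (PIf A P Q) = fv_pred A \<union> fv_proc P \<union> fv_proc Q"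
| "fv_proc PNil = {}"

fun fpv_proc :: "proc \<Rightarrow> pvar set" where
  "fpv_proc (PSend l a P) = fpv_proc P"
| "fpv_proc (PBranch bs) = (\<Union>(l, y, Q) \<in> set bs. fpv_proc Q)"
| "fpv_proc (PRec X P) = fpv_proc P - {X}"
| "fpv_proc (PVar X) = {X}"
| "fpv_proc (PIf A P Q) = fpv_proc P \<union> fpv_proc Q"
| "fpv_proc PNil = {}"

fun unguarded_proc :: "pvar \<Rightarrow> proc \<Rightarrow> bool" where
  "unguarded_proc X (PSend l a P) = False"
| "unguarded_proc X (PBranch bs) = False"
| "unguarded_proc X (PRec Y P) = (X \<noteq> Y \<and> unguarded_proc X P)"
| "unguarded_proc X (PVar Y) = (X = Y)"
| "unguarded_proc X (PIf A P Q) = (unguarded_proc X P \<or> unguarded_proc X Q)"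
| "unguarded_proc X PNil = False"

fun wf_proc :: "proc \<Rightarrow> bool" where
  "wf_proc (PSend l a P) = wf_proc P"
| "wf_proc (PBranch bs) = (distinct (map fst bs) \<and> (\<forall>(l, y, Q) \<in> set bs. wf_proc Q))"
| "wf_proc (PRec X P) = (\<not> unguarded_proc X P \<and> wf_proc P)"
| "wf_proc (PVar X) = True"
| "wf_proc (PIf A P Q) = (wf_proc P \<and> wf_proc Q)"
| "wf_proc PNil = True"

definition is_process :: "proc \<Rightarrow> bool" where
  "is_process P \<longleftrightarrow> wf_proc P \<and> fv_proc P = {} \<and> fpv_proc P = {}"

datatype pact = PTau | POut label val | PIn label val

inductive proc_step :: "proc \<Rightarrow> pact \<Rightarrow> proc \<Rightarrow> bool" where
  p_rec: "proc_step (PRec X P) PTau (psubst_X X (PRec X P) P)"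
| p_out: "proc_step (PSend l (AVal v) P) (POut l v) P"
| p_in: "(l, x, P) \<in> set bs \<Longrightarrow> proc_step (PBranch bs) (PIn l v) (psubst_v x v P)"
| p_if_t: "eval_pred A = Some True \<Longrightarrow> proc_step (PIf A P Q) PTau P"
| p_if_f: "eval_pred A = Some False \<Longrightarrow> proc_step (PIf A P Q) PTau Q"

section \<open>Session types (equi-recursive)\<close>

datatype stype =
    SSel "(label \<times> btype \<times> stype) list"
  | SBra "(label \<times> btype \<times> stype) list"
  | SRec pvar stype
  | STVar pvar
  | SEnd

text \<open>Substitution (only ever used with closed substituted types, hence capture-free).\<close>
fun tsubst :: "pvar \<Rightarrow> stype \<Rightarrow> stype \<Rightarrow> stype" where
  "tsubst X T (SSel bs) = SSel (map (\<lambda>(l, B, S). (l, B, tsubst X T S)) bs)"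
| "tsubst X T (SBra bs) = SBra (map (\<lambda>(l, B, S). (l, B, tsubst X T S)) bs)"
| "tsubst X T (SRec Y S) = (if X = Y then SRec Y S else SRec Y (tsubst X T S))"
| "tsubst X T (STVar Y) = (if X = Y then T else STVar Y)"
| "tsubst X T SEnd = SEnd"

fun ftv :: "stype \<Rightarrow> pvar set" where
  "ftv (SSel bs) = (\<Union>(l, B, S) \<in> set bs. ftv S)"
| "ftv (SBra bs) = (\<Union>(l, B, S) \<in> set bs. ftv S)"
| "ftv (SRec X S) = ftv S - {X}"
| "ftv (STVar X) = {X}"
| "ftv SEnd = {}"

fun unguarded_ty :: "pvar \<Rightarrow> stype \<Rightarrow> bool" where
  "unguarded_ty X (SSel bs) = False"
| "unguarded_ty X (SBra bs) = False"
| "unguarded_ty X (SRec Y S) = (X \<noteq> Y \<and> unguarded_ty X S)"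
| "unguarded_ty X (STVar Y) = (X = Y)"
| "unguarded_ty X SEnd = False"

fun wf_stype :: "stype \<Rightarrow> bool" where
  "wf_stype (SSel bs) = (bs \<noteq> [] \<and> distinct (map fst bs) \<and> (\<forall>(l, B, S) \<in> set bs. wf_stype S))"
| "wf_stype (SBra bs) = (bs \<noteq> [] \<and> distinct (map fst bs) \<and> (\<forall>(l, B, S) \<in> set bs. wf_stype S))"
| "wf_stype (SRec X S) = (\<not> unguarded_ty X S \<and> wf_stype S)"
| "wf_stype (STVar X) = True"
| "wf_stype SEnd = True"

definition closed_stype :: "stype \<Rightarrow> bool" where
  "closed_stype S \<longleftrightarrow> wf_stype S \<and> ftv S = {}"

inductive unfolds :: "stype \<Rightarrow> stype \<Rightarrow> bool" where
  unf_refl: "unfolds S S"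
| unf_step: "unfolds (tsubst X (SRec X S) S) T \<Longrightarrow> unfolds (SRec X S) T"

text \<open>Equality of (closed) session types up to the equi-recursive identification, i.e.
  equality of their infinite unfoldings (coinductively).  Choices are compared as
  label-indexed families, independent of list order.\<close>
coinductive teq :: "stype \<Rightarrow> stype \<Rightarrow> bool" where
  teq_end: "unfolds S SEnd \<Longrightarrow> unfolds T SEnd \<Longrightarrow> teq S T"
| teq_sel: "unfolds S (SSel bs) \<Longrightarrow> unfolds T (SSel cs) \<Longrightarrow>
    (\<forall>(l, B, S') \<in> set bs. \<exists>T'. (l, B, T') \<in> set cs \<and> teq S' T') \<Longrightarrow>
    (\<forall>(l, B, T') \<in> set cs. \<exists>S'. (l, B, S') \<in> set bs \<and> teq S' T') \<Longrightarrow> teq S T"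
| teq_bra: "unfolds S (SBra bs) \<Longrightarrow> unfolds T (SBra cs) \<Longrightarrow>
    (\<forall>(l, B, S') \<in> set bs. \<exists>T'. (l, B, T') \<in> set cs \<and> teq S' T') \<Longrightarrow>
    (\<forall>(l, B, T') \<in> set cs. \<exists>S'. (l, B, S') \<in> set bs \<and> teq S' T') \<Longrightarrow> teq S T"

inductive typed :: "(pvar \<Rightarrow> stype option) \<Rightarrow> (vname \<Rightarrow> btype option) \<Rightarrow> proc \<Rightarrow> stype \<Rightarrow> bool" where
  tBra: "(\<forall>(l, B, S) \<in> set ts. \<exists>x P. (l, x, P) \<in> set bs \<and> typed \<Theta> (\<Gamma>(x \<mapsto> B)) P S)
         \<Longrightarrow> typed \<Theta> \<Gamma> (PBranch bs) (SBra ts)"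
| tSel: "(l, B, S) \<in> set ts \<Longrightarrow> aexp_has_type \<Gamma> a B \<Longrightarrow> typed \<Theta> \<Gamma> P S
         \<Longrightarrow> typed \<Theta> \<Gamma> (PSend l a P) (SSel ts)"
| tRec: "typed (\<Theta>(X \<mapsto> S)) \<Gamma> P S \<Longrightarrow> typed \<Theta> \<Gamma> (PRec X P) S"
| tPVar: "\<Theta> X = Some S \<Longrightarrow> typed \<Theta> \<Gamma> (PVar X) S"
| tIf: "pred_bool \<Gamma> A \<Longrightarrow> typed \<Theta> \<Gamma> P S \<Longrightarrow> typed \<Theta> \<Gamma> Q S \<Longrightarrow> typed \<Theta> \<Gamma> (PIf A P Q) S"
| tNil: "typed \<Theta> \<Gamma> PNil SEnd"
| tEq: "typed \<Theta> \<Gamma> P S \<Longrightarrow> teq S S' \<Longrightarrow> typed \<Theta> \<Gamma> P S'"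
  \<comment> \<open>equi-recursive types: a judgement holds for all types identified with S\<close>

datatype mon =
    MSendP label aexp mon
  | MRecvP "(label \<times> vname \<times> mon) list"
  | MSendE label aexp mon
  | MRecvE "(label \<times> vname \<times> mon) list"
  | MRec pvar mon
  | MVar pvar
  | MIf pred mon mon
  | MNil
  | NoP
  | NoE

fun msubst_v :: "vname \<Rightarrow> val \<Rightarrow> mon \<Rightarrow> mon" where
  "msubst_v x v (MSendP l a M) = MSendP l (subst_a x v a) (msubst_v x v M)"
| "msubst_v x v (MRecvP bs) =
     MRecvP (map (\<lambda>(l, y, N). (l, y, if y = x then N else msubst_v x v N)) bs)"
| "msubst_v x v (MSendE l a M) = MSendE l (subst_a x v a) (msubst_v x v M)"
| "msubst_v x v (MRecvE bs) =
     MRecvE (map (\<lambda>(l, y, N). (l, y, if y = x then N else msubst_v x v N)) bs)"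
| "msubst_v x v (MRec X M) = MRec X (msubst_v x v M)"
| "msubst_v x v (MVar X) = MVar X"
| "msubst_v x v (MIf A M N) = MIf (subst_pred x v A) (msubst_v x v M) (msubst_v x v N)"
| "msubst_v x v MNil = MNil"
| "msubst_v x v NoP = NoP"
| "msubst_v x v NoE = NoE"

fun msubst_X :: "pvar \<Rightarrow> mon \<Rightarrow> mon \<Rightarrow> mon" where
  "msubst_X X R (MSendP l a M) = MSendP l a (msubst_X X R M)"
| "msubst_X X R (MRecvP bs) = MRecvP (map (\<lambda>(l, y, N). (l, y, msubst_X X R N)) bs)"
| "msubst_X X R (MSendE l a M) = MSendE l a (msubst_X X R M)"
| "msubst_X X R (MRecvE bs) = MRecvE (map (\<lambda>(l, y, N). (l, y, msubst_X X R N)) bs)"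
| "msubst_X X R (MRec Y M) = (if X = Y then MRec Y M else MRec Y (msubst_X X R M))"
| "msubst_X X R (MVar Y) = (if X = Y then R else MVar Y)"
| "msubst_X X R (MIf A M N) = MIf A (msubst_X X R M) (msubst_X X R N)"
| "msubst_X X R MNil = MNil"
| "msubst_X X R NoP = NoP"
| "msubst_X X R NoE = NoE"

datatype mact = MTau | MOutP label val | MInP label val | MOutE label val | MInE label val

inductive mon_step :: "mon \<Rightarrow> mact \<Rightarrow> mon \<Rightarrow> bool" where
  m_outp: "mon_step (MSendP l (AVal v) M) (MOutP l v) M"
| m_oute: "mon_step (MSendE l (AVal v) M) (MOutE l v) M"
| m_rec: "mon_step (MRec X M) MTau (msubst_X X (MRec X M) M)"
| m_inp: "(l, x, M) \<in> set bs \<Longrightarrow> mon_step (MRecvP bs) (MInP l v) (msubst_v x v M)"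
| m_ine: "(l, x, M) \<in> set bs \<Longrightarrow> mon_step (MRecvE bs) (MInE l v) (msubst_v x v M)"
| m_if_t: "eval_pred A = Some True \<Longrightarrow> mon_step (MIf A M N) MTau M"
| m_if_f: "eval_pred A = Some False \<Longrightarrow> mon_step (MIf A M N) MTau N"
| m_nop: "l \<notin> fst ` set bs \<Longrightarrow> mon_step (MRecvP bs) (MInP l v) NoP"
| m_noe: "l \<notin> fst ` set bs \<Longrightarrow> mon_step (MRecvE bs) (MInE l v) NoE"

datatype eact = EOut label val
              | EIn label val

inductive sys_step :: "proc \<Rightarrow> mon \<Rightarrow> eact option \<Rightarrow> proc \<Rightarrow> mon \<Rightarrow> bool" where
  s_p2m: "proc_step P (POut l v) P' \<Longrightarrow> mon_step M (MInP l v) M' \<Longrightarrow> sys_step P M None P' M'"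
| s_m2p: "proc_step P (PIn l v) P' \<Longrightarrow> mon_step M (MOutP l v) M' \<Longrightarrow> sys_step P M None P' M'"
| s_oute: "mon_step M (MOutE l v) M' \<Longrightarrow> sys_step P M (Some (EOut l v)) P M'"
| s_ine: "mon_step M (MInE l v) M' \<Longrightarrow> sys_step P M (Some (EIn l v)) P M'"
| s_ptau: "proc_step P PTau P' \<Longrightarrow> sys_step P M None P' M"
| s_mtau: "mon_step M MTau M' \<Longrightarrow> sys_step P M None P M'"

inductive weak_trace :: "proc \<Rightarrow> mon \<Rightarrow> eact list \<Rightarrow> proc \<Rightarrow> mon \<Rightarrow> bool" where
  wt_refl: "weak_trace P M [] P M"
| wt_tau: "sys_step P M None P1 M1 \<Longrightarrow> weak_trace P1 M1 t P' M' \<Longrightarrow> weak_trace P M t P' M'"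
| wt_vis: "sys_step P M (Some a) P1 M1 \<Longrightarrow> weak_trace P1 M1 t P' M' \<Longrightarrow> weak_trace P M (a # t) P' M'"

definition monitor_sound :: "mon \<Rightarrow> stype \<Rightarrow> bool" where
  "monitor_sound M S \<longleftrightarrow>
     (\<forall>P. is_process P \<longrightarrow> (\<exists>t P'. weak_trace P M t P' NoP) \<longrightarrow> \<not> typed Map.empty Map.empty P S)"

definition monitor_complete :: "mon \<Rightarrow> stype \<Rightarrow> bool" where
  "monitor_complete M S \<longleftrightarrow>
     (\<forall>P. is_process P \<longrightarrow> \<not> typed Map.empty Map.empty P S \<longrightarrow> (\<exists>t P'. weak_trace P M t P' NoP))"

end

theory Submission
  imports Defs
begin

fun dv :: "btype \<Rightarrow> val" where
  "dv TInt = VInt 0"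
| "dv TStr = VStr []"
| "dv TBool = VBool True"
| "dv (TPair B C) = VPair (dv B) (dv C)"

lemma dv_type: "val_has_type (dv B) B"
  by (induction B) auto

fun inh :: "stype \<Rightarrow> proc" where
  "inh (SSel []) = PNil"
| "inh (SSel ((l, B, S) # bs)) = PSend l (AVal (dv B)) (inh S)"
| "inh (SBra bs) = PBranch (map (\<lambda>(l, B, S). (l, ''x'', inh S)) bs)"
| "inh (SRec X S) = PRec X (inh S)"
| "inh (STVar X) = PVar X"
| "inh SEnd = PNil"

fun ssubst :: "(pvar \<Rightarrow> stype) \<Rightarrow> stype \<Rightarrow> stype" where
  "ssubst \<rho> (SSel bs) = SSel (map (\<lambda>(l, B, S). (l, B, ssubst \<rho> S)) bs)"
| "ssubst \<rho> (SBra bs) = SBra (map (\<lambda>(l, B, S). (l, B, ssubst \<rho> S)) bs)"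
| "ssubst \<rho> (SRec X S) = SRec X (ssubst (\<rho>(X := STVar X)) S)"
| "ssubst \<rho> (STVar X) = \<rho> X"
| "ssubst \<rho> SEnd = SEnd"

lemma ssubst_cong: "(\<forall>Y\<in>ftv S. \<rho>1 Y = \<rho>2 Y) \<Longrightarrow> ssubst \<rho>1 S = ssubst \<rho>2 S"
proof (induction \<rho>1 S arbitrary: \<rho>2 rule: ssubst.induct)
  case (1 \<rho> bs) thus ?case by (fastforce intro!: map_cong)
next
  case (2 \<rho> bs) thus ?case by (fastforce intro!: map_cong)
next
  case (3 \<rho> X S) thus ?case by (simp add: fun_upd_def)
qed auto

lemma ssubst_id: "ssubst STVar S = S"
proof (induction S)
  case (SSel x) thus ?case by (auto intro!: map_idI)
next
  case (SBra x) thus ?case by (auto intro!: map_idI)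
next
  case (SRec X S)
  have "STVar(X := STVar X) = STVar" by auto
  thus ?case using SRec by simp
qed auto

lemma tsubst_fresh: "X \<notin> ftv T \<Longrightarrow> tsubst X R T = T"
proof (induction X R T rule: tsubst.induct)
  case (1 X T bs) thus ?case by (auto intro!: map_idI)
next
  case (2 X T bs) thus ?case by (auto intro!: map_idI)
qed auto

lemma ftv_ssubst: "ftv (ssubst \<rho> S) \<subseteq> (\<Union>Y\<in>ftv S. ftv (\<rho> Y))"
proof (induction \<rho> S rule: ssubst.induct)
  case (1 \<rho> bs) thus ?case by fastforce
next
  case (2 \<rho> bs) thus ?case by fastforce
next
  case (3 \<rho> X S)
  show ?case
  proof
    fix Z assume "Z \<in> ftv (ssubst \<rho> (SRec X S))"
    hence "Z \<noteq> X" "Z \<in> ftv (ssubst (\<rho>(X := STVar X)) S)" by auto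
    with 3 obtain Y where "Y \<in> ftv S" "Z \<in> ftv ((\<rho>(X := STVar X)) Y)" by blast
    with \<open>Z \<noteq> X\<close> show "Z \<in> (\<Union>Y\<in>ftv (SRec X S). ftv (\<rho> Y))"
      by (cases "Y = X") auto
  qed
qed auto

lemma ung_ftv: "unguarded_ty X S \<Longrightarrow> X \<in> ftv S"
  by (induction S) auto

lemma ung_ssubst: "unguarded_ty Z (ssubst \<rho> S) \<Longrightarrow> \<exists>Y. unguarded_ty Y S \<and> unguarded_ty Z (\<rho> Y)"
proof (induction \<rho> S rule: ssubst.induct)
  case (3 \<rho> X S)
  then obtain Y where "unguarded_ty Y S" "unguarded_ty Z ((\<rho>(X := STVar X)) Y)" "Z \<noteq> X" by (auto simp add: fun_upd_def)
  thus ?case by (cases "Y = X") auto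
qed auto

definition goodsub :: "(pvar \<Rightarrow> stype) \<Rightarrow> bool" where
  "goodsub \<rho> \<longleftrightarrow> (\<forall>Y. wf_stype (\<rho> Y) \<and> ftv (\<rho> Y) \<subseteq> {Y})"

lemma goodsub_upd: "goodsub \<rho> \<Longrightarrow> goodsub (\<rho>(X := STVar X))"
  by (auto simp: goodsub_def)

lemma wf_ssubst: "wf_stype S \<Longrightarrow> goodsub \<rho> \<Longrightarrow> wf_stype (ssubst \<rho> S)"
proof (induction \<rho> S rule: ssubst.induct)
  case (1 \<rho> bs) thus ?case by (auto simp: comp_def case_prod_beta)
next
  case (2 \<rho> bs) thus ?case by (auto simp: comp_def case_prod_beta)
next
  case (3 \<rho> X S)
  have "\<not> unguarded_ty X (ssubst (\<rho>(X := STVar X)) S)"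
  proof
    assume "unguarded_ty X (ssubst (\<rho>(X := STVar X)) S)"
    then obtain Y where Y: "unguarded_ty Y S" "unguarded_ty X ((\<rho>(X := STVar X)) Y)"
      using ung_ssubst by blast
    show False
    proof (cases "Y = X")
      case True thus ?thesis using Y 3 by auto
    next
      case False
      hence "X \<in> ftv (\<rho> Y)" using Y ung_ftv by fastforce
      thus ?thesis using 3(3) False unfolding goodsub_def by blast
    qed
  qed
  thus ?case using 3 goodsub_upd by (simp add: fun_upd_def)
next
  case (4 \<rho> X) thus ?case by (auto simp: goodsub_def)
qed auto

lemma tsubst_ssubst:
  "(\<forall>Y. Y \<noteq> X \<longrightarrow> X \<notin> ftv (\<rho> Y)) \<Longrightarrow>
   tsubst X R (ssubst \<rho> S) = ssubst (\<lambda>Y. tsubst X R (\<rho> Y)) S"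
proof (induction \<rho> S rule: ssubst.induct)
  case (1 \<rho> bs) thus ?case by (fastforce intro!: map_cong)
next
  case (2 \<rho> bs) thus ?case by (fastforce intro!: map_cong)
next
  case (3 \<rho> Z S)
  show ?case
  proof (cases "X = Z")
    case True
    have "ssubst (\<rho>(Z := STVar Z)) S = ssubst ((\<lambda>Y. tsubst X R (\<rho> Y))(Z := STVar Z)) S"
      using 3(2) True by (intro ssubst_cong) (auto intro: tsubst_fresh[symmetric])
    thus ?thesis using True by simp
  next
    case False
    have h: "\<forall>Y. Y \<noteq> X \<longrightarrow> X \<notin> ftv ((\<rho>(Z := STVar Z)) Y)" using 3(2) False by auto
    have "(\<lambda>Y. tsubst X R ((\<rho>(Z := STVar Z)) Y)) = (\<lambda>Y. tsubst X R (\<rho> Y))(Z := STVar Z)"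
      using False by auto
    thus ?thesis using 3(1)[OF h] False by (simp add: fun_upd_def)
  qed
qed auto

lemma tsubst_as_ssubst: "tsubst X R S = ssubst (STVar(X := R)) S"
proof -
  have "tsubst X R S = tsubst X R (ssubst STVar S)" by (simp add: ssubst_id)
  also have "\<dots> = ssubst (\<lambda>Y. tsubst X R (STVar Y)) S"
    by (rule tsubst_ssubst) auto
  also have "(\<lambda>Y. tsubst X R (STVar Y)) = STVar(X := R)" by auto
  finally show ?thesis .
qed


lemma closed_unfold1:
  assumes "closed_stype (SRec X S)"
  shows "closed_stype (tsubst X (SRec X S) S)"
proof -
  let ?R = "SRec X S"
  have g: "goodsub (STVar(X := ?R))" using assms by (auto simp: goodsub_def closed_stype_def)
  have "wf_stype S" using assms by (simp add: closed_stype_def)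
  hence w: "wf_stype (tsubst X ?R S)" using g wf_ssubst tsubst_as_ssubst by metis
  have fS: "ftv S \<subseteq> {X}" using assms by (auto simp: closed_stype_def)
  have "ftv (tsubst X ?R S) \<subseteq> (\<Union>Y\<in>ftv S. ftv ((STVar(X := ?R)) Y))"
    using ftv_ssubst tsubst_as_ssubst by metis
  also have "\<dots> = {}" using fS assms by (auto simp: closed_stype_def)
  finally show ?thesis using w by (simp add: closed_stype_def)
qed

fun spine :: "stype \<Rightarrow> nat" where
  "spine (SRec X S) = Suc (spine S)"
| "spine _ = 0"

lemma spine_tsubst: "\<not> unguarded_ty X S \<Longrightarrow> spine (tsubst X R S) = spine S"
  by (induction S) auto

lemma exists_unfold:
  "closed_stype U \<Longrightarrow> \<exists>N. unfolds U N \<and> closed_stype N \<and> (\<forall>X S. N \<noteq> SRec X S)"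
proof (induction "spine U" arbitrary: U rule: less_induct)
  case less
  show ?case
  proof (cases U)
    case (SRec X S)
    let ?U = "tsubst X (SRec X S) S"
    have c: "closed_stype ?U" using less(2) SRec closed_unfold1 by simp
    have "spine ?U = spine S" using less(2) SRec spine_tsubst by (simp add: closed_stype_def)
    hence "spine ?U < spine U" using SRec by simp
    then obtain N where "unfolds ?U N \<and> closed_stype N \<and> (\<forall>X S. N \<noteq> SRec X S)"
      using less(1) c by blast
    thus ?thesis using SRec unf_step by blast
  qed (use less(2) unf_refl in auto)
qed

lemma unfolds_closed: "unfolds U N \<Longrightarrow> closed_stype U \<Longrightarrow> closed_stype N"
  by (induction rule: unfolds.induct) (auto intro: closed_unfold1)

lemma teq_refl: "closed_stype U \<Longrightarrow> teq U U"
proof (coinduction arbitrary: U rule: teq.coinduct)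
  case (teq U)
  then obtain N where N: "unfolds U N" "closed_stype N" "\<forall>X S. N \<noteq> SRec X S"
    using exists_unfold by blast
  show ?case
  proof (cases N)
    case (SSel bs)
    have "\<forall>(l, B, S')\<in>set bs. closed_stype S'"
      using N(2) SSel by (fastforce simp: closed_stype_def)
    thus ?thesis using N SSel by fastforce
  next
    case (SBra bs)
    have "\<forall>(l, B, S')\<in>set bs. closed_stype S'"
      using N(2) SBra by (fastforce simp: closed_stype_def)
    thus ?thesis using N SBra by fastforce
  next
    case (STVar X) thus ?thesis using N by (simp add: closed_stype_def)
  qed (use N in auto)
qed

lemma teq_right: "teq S T \<Longrightarrow> (\<forall>N. unfolds T N \<longrightarrow> unfolds T' N) \<Longrightarrow> teq S T'"
  by (erule teq.cases) (auto intro: teq.intros)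


lemma closed_ssubst:
  "wf_stype S \<Longrightarrow> (\<forall>Y. closed_stype (\<rho> Y)) \<Longrightarrow> closed_stype (ssubst \<rho> S)"
proof -
  assume a: "wf_stype S" "\<forall>Y. closed_stype (\<rho> Y)"
  hence "goodsub \<rho>" by (auto simp: goodsub_def closed_stype_def)
  hence "wf_stype (ssubst \<rho> S)" using a wf_ssubst by blast
  moreover have "ftv (ssubst \<rho> S) = {}" using ftv_ssubst[of \<rho> S] a
    by (auto simp: closed_stype_def)
  ultimately show ?thesis by (simp add: closed_stype_def)
qed

lemma inh_typed:
  "wf_stype S \<Longrightarrow> (\<forall>Y. closed_stype (\<rho> Y)) \<Longrightarrow> (\<forall>X\<in>ftv S. \<Theta> X = Some (\<rho> X)) \<Longrightarrow>
   typed \<Theta> \<Gamma> (inh S) (ssubst \<rho> S)"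
proof (induction S arbitrary: \<rho> \<Theta> \<Gamma> rule: inh.induct)
  case (1) thus ?case by simp
next
  case (2 l B S bs)
  have "typed \<Theta> \<Gamma> (inh S) (ssubst \<rho> S)" using 2 by auto
  moreover have "(l, B, ssubst \<rho> S) \<in> set (map (\<lambda>(l, B, S). (l, B, ssubst \<rho> S)) ((l, B, S) # bs))"
    by simp
  ultimately show ?case by (auto intro!: typed.tSel simp: dv_type simp del: set_map)
next
  case (3 bs)
  show ?case
  proof (simp, rule typed.tBra, clarsimp)
    fix l B S assume m: "(l, B, S) \<in> set bs"
    have "typed \<Theta> (\<Gamma>(''x'' \<mapsto> B)) (inh S) (ssubst \<rho> S)"
      using 3 m by (fastforce intro!: 3(1)[OF m refl refl])
    thus "\<exists>x P. (l, x, P) \<in> (\<lambda>(l, B, S). (l, ''x'', inh S)) ` set bs \<and> typed \<Theta> (\<Gamma>(x \<mapsto> B)) P (ssubst \<rho> S)"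
      using m by force
  qed
next
  case (4 X S)
  define \<rho>' where "\<rho>' = \<rho>(X := STVar X)"
  define R where "R = SRec X (ssubst \<rho>' S)"
  have R: "R = ssubst \<rho> (SRec X S)" by (simp add: R_def \<rho>'_def)
  have cR: "closed_stype R" unfolding R using closed_ssubst 4 by blast
  define \<rho>'' where "\<rho>'' = \<rho>(X := R)"
  have c'': "\<forall>Y. closed_stype (\<rho>'' Y)" using cR 4 by (simp add: \<rho>''_def)
  have wS: "wf_stype S" using 4 by simp
  have IH: "typed (\<Theta>(X \<mapsto> R)) \<Gamma> (inh S) (ssubst \<rho>'' S)"
    using 4 c'' wS by (intro 4(1)) (auto simp: \<rho>''_def)
  have "tsubst X R (ssubst \<rho>' S) = ssubst (\<lambda>Y. tsubst X R (\<rho>' Y)) S"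
    using 4(3) by (intro tsubst_ssubst) (auto simp: \<rho>'_def closed_stype_def)
  also have "\<dots> = ssubst \<rho>'' S"
    using 4(3) by (intro ssubst_cong) (auto simp: \<rho>'_def \<rho>''_def closed_stype_def intro: tsubst_fresh)
  finally have eq: "tsubst X R (ssubst \<rho>' S) = ssubst \<rho>'' S" .
  have "teq (ssubst \<rho>'' S) (ssubst \<rho>'' S)" using closed_ssubst[OF wS c''] teq_refl by blast
  hence "teq (ssubst \<rho>'' S) R"
    by (rule teq_right) (auto simp: R_def eq[symmetric] intro: unf_step)
  hence "typed (\<Theta>(X \<mapsto> R)) \<Gamma> (inh S) R" using IH typed.tEq by blast
  hence "typed \<Theta> \<Gamma> (PRec X (inh S)) R" by (rule typed.tRec)
  thus ?case using R by simp
next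
  case (5 X) thus ?case by (auto intro: typed.tPVar)
next
  case 6 thus ?case by (auto intro: typed.tNil)
qed


lemma inh_ung: "unguarded_proc X (inh S) \<Longrightarrow> unguarded_ty X S"
  by (induction S rule: inh.induct) auto

lemma inh_wf: "wf_stype S \<Longrightarrow> wf_proc (inh S)"
proof (induction S rule: inh.induct)
  case (3 bs)
  have "map fst (map (\<lambda>(l, B, S). (l, ''x'', inh S)) bs) = map fst bs" by auto
  thus ?case using 3 by (auto simp del: map_map)
next
  case (4 X S) thus ?case using inh_ung by auto
qed auto

lemma inh_fv: "fv_proc (inh S) = {}"
  by (induction S rule: inh.induct) auto

lemma inh_fpv: "fpv_proc (inh S) \<subseteq> ftv S"
  by (induction S rule: inh.induct) fastforce+

lemma inh_process: "closed_stype S \<Longrightarrow> is_process (inh S)"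
  using inh_wf inh_fv inh_fpv unfolding is_process_def closed_stype_def by blast

lemma unfolds_det:
  "unfolds S T1 \<Longrightarrow> unfolds S T2 \<Longrightarrow> (\<forall>X S. T1 \<noteq> SRec X S) \<Longrightarrow> (\<forall>X S. T2 \<noteq> SRec X S) \<Longrightarrow> T1 = T2"
proof (induction arbitrary: T2 rule: unfolds.induct)
  case (unf_refl S)
  from unf_refl(1) show ?case
  proof (cases rule: unfolds.cases)
    case (unf_step X S0) thus ?thesis using unf_refl(2) by blast
  qed simp
next
  case (unf_step X S T)
  note IH = unf_step.IH and P3 = unf_step.prems(3) and P2 = unf_step.prems(2)
  from unf_step.prems(1) show ?case
  proof (cases rule: unfolds.cases)
    case unf_refl thus ?thesis using P3 by blast
  next
    case unf_step
    thus ?thesis using IH P2 P3 by auto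
  qed
qed

lemma typed_nil: "typed \<Theta> \<Gamma> P S \<Longrightarrow> P = PNil \<Longrightarrow> unfolds S SEnd"
proof (induction rule: typed.induct)
  case (tNil \<Theta> \<Gamma>) show ?case by (rule unf_refl)
next
  case (tEq \<Theta> \<Gamma> P S S')
  have u: "unfolds S SEnd" using tEq by simp
  from tEq(2) show ?case
  proof (cases rule: teq.cases)
    case (teq_sel bs cs) thus ?thesis using unfolds_det[OF u] by fastforce
  next
    case (teq_bra bs cs) thus ?thesis using unfolds_det[OF u] by fastforce
  qed simp
qed auto

lemma nil_untyped: "\<not> teq S SEnd \<Longrightarrow> \<not> typed Map.empty Map.empty PNil S"
  using typed_nil teq.teq_end unf_refl by blast

lemma nil_trace: "weak_trace P M t P' M' \<Longrightarrow> P = PNil \<Longrightarrow> weak_trace Q M t Q M'"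
proof (induction rule: weak_trace.induct)
  case (wt_refl P M) show ?case by (rule weak_trace.wt_refl)
next
  case (wt_tau P M P1 M1 t P' M')
  from wt_tau(1) show ?case
  proof (cases rule: sys_step.cases)
    case (s_mtau) thus ?thesis using wt_tau by (auto intro: weak_trace.wt_tau sys_step.s_mtau)
  qed (use wt_tau in \<open>auto elim: proc_step.cases\<close>)
next
  case (wt_vis P M a P1 M1 t P' M')
  from wt_vis(1) show ?case
  proof (cases rule: sys_step.cases)
    case (s_oute) thus ?thesis using wt_vis by (auto intro: weak_trace.wt_vis sys_step.s_oute)
  next
    case (s_ine) thus ?thesis using wt_vis by (auto intro: weak_trace.wt_vis sys_step.s_ine)
  qed
qed

theorem mainTheorem4:
  assumes "closed_stype S"
    and "\<not> teq S SEnd"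
  shows "\<not> (\<exists>M. monitor_sound M S \<and> monitor_complete M S)"
proof
  assume "\<exists>M. monitor_sound M S \<and> monitor_complete M S"
  then obtain M where snd: "monitor_sound M S" and cmp: "monitor_complete M S" by blast
  have "is_process PNil" by (simp add: is_process_def)
  then obtain t P' where "weak_trace PNil M t P' NoP"
    using cmp nil_untyped[OF assms(2)] unfolding monitor_complete_def by blast
  hence tr: "weak_trace (inh S) M t (inh S) NoP" using nil_trace by blast
  have "typed Map.empty Map.empty (inh S) (ssubst (\<lambda>_. SEnd) S)"
    using assms(1) by (intro inh_typed) (auto simp: closed_stype_def)
  moreover have "ssubst (\<lambda>_. SEnd) S = S"
    using assms(1) ssubst_cong[of S "\<lambda>_. SEnd" STVar] ssubst_id by (simp add: closed_stype_def)
  ultimately have "typed Map.empty Map.empty (inh S) S" by simp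
  thus False using snd inh_process[OF assms(1)] tr unfolding monitor_sound_def by blast
qed

end
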